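(* Suppose Assumptions A1, A2 (SDSD) and A3 hold for the steady state $(x^s,u^s)$ and $\gamma\in(0,1)$. Define the undiscounted stage cost $\tilde L^\gamma(x,u):=L(x,u)+(\gamma-1)V_\star^\gamma(f(x,u))$ and the undiscounted optimal value $\tilde V_\star^\gamma(x_0):=\min_{\pi\in\Pi}\sum_{k=0}^\infty\tilde L^\gamma(x_k^\pi,\pi(x_k^\pi))$. Then for all $x_0\in\mathbb{X}_0$ the discounted optimal policy $\pi_\star^\gamma$ is an optimal policy for the undiscounted problem with stage cost $\tilde L^\gamma$ (i.e. $\tilde\pi_\star^\gamma=\pi_\star^\gamma$), and $\tilde V_\star^\gamma(x_0)=V_\star^\gamma(x_0)$.
   Context: Setting: discrete-time system $x_+=f(x,u)$ with $x\in\mathbb{R}^{n_x}$, $u\in\mathbb{R}^{n_u}$, stage cost $L(x,u)$, constraint set $\mathbb{Z}:=\{(x,u): h(x,u)\le 0\}$, with the convention $L(x,u)=\infty$ for $(x,u)\notin\mathbb{Z}$, and discount factor $\gamma\in(0,1)$. For a policy $\pi$ the closed-loop trajectory is $x_{k+1}^\pi=f(x_k^\pi,\pi(x_k^\pi))$, $x_0^\pi=x_0$. $\mathbb{X}_0:=\{x_0:\exists\pi \text{ with } h(x_k^\pi,\pi(x_k^\pi))\le0\ \forall k\ge0\}$ and $\Pi:=\{\pi: h(x_k^\pi,\pi(x_k^\pi))\le 0\ \forall x_0\in\mathbb{X}_0,\forall k\ge 0\}$. The optimal value function is $V_\star^\gamma(x_0):=\min_{\pi\in\Pi}\sum_{k=0}^\infty\gamma^kL(x_k^\pi,\pi(x_k^\pi))$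 and $\pi_\star^\gamma$ denotes an optimal policy; it satisfies the Bellman equation $V_\star^\gamma(x)=\min_{\pi\in\Pi}L(x,\pi(x))+\gamma V_\star^\gamma(f(x,\pi(x)))$. $(x^s,u^s)$ is a steady state, $x^s=f(x^s,u^s)$, normalized so that $L(x^s,u^s)=0$. Assumption A1: $\mathbb{Z}$ and $\mathbb{X}_0$ are compact and $|L(x,u)|<\infty$ for all $(x,u)\in\mathbb{Z}$. Assumption A2 (Strong Discounted Strict Dissipativity, SDSD): there exist a function $\lambda$, continuous at $x^s$, bounded on bounded sets, with $\lambda(x^s)=0$, and $\rho\in\mathcal{K}$ such that for all $(x,u)\in\mathbb{Z}$: (i) $L(x,u)+\lambda(x)-\gamma\lambda(f(x,u))\ge\rho(\|x-x^s\|)$; (ii) $L(x,u)+\lambda(x)-\lambda(f(x,u))+(\gamma-1)V_\star^\gamma(f(x,u))\ge\rho(\|x-x^s\|)$. Assumption A3: $V_\star^\gamma$ is continuous at $x^s$ and bounded on $\mathbb{X}_0$. $\mathcal{K}$ denotes continuous, strictly increasing functions $\mathbb{R}_{\ge0}\to\mathbb{R}_{\ge0}$ vanishing at $0$. *)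

theory Defs
  imports "HOL-Analysis.Analysis"
begin

primrec traj :: "('x \<Rightarrow> 'u \<Rightarrow> 'x) \<Rightarrow> ('x \<Rightarrow> 'u) \<Rightarrow> 'x \<Rightarrow> nat \<Rightarrow> 'x" where
  "traj f \<pi> x0 0 = x0"
| "traj f \<pi> x0 (Suc k) = f (traj f \<pi> x0 k) (\<pi> (traj f \<pi> x0 k))"

definition Zset :: "('x \<Rightarrow> 'u \<Rightarrow> real^'m) \<Rightarrow> ('x \<times> 'u) set" where
  "Zset h = {(x, u). h x u \<le> 0}"

definition X0set :: "('x \<Rightarrow> 'u \<Rightarrow> 'x) \<Rightarrow> ('x \<Rightarrow> 'u \<Rightarrow> real^'m) \<Rightarrow> 'x set" where
  "X0set f h = {x0. \<exists>\<pi>. \<forall>k. h (traj f \<pi> x0 k) (\<pi> (traj f \<pi> x0 k)) \<le> 0}"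

definition Pol :: "('x \<Rightarrow> 'u \<Rightarrow> 'x) \<Rightarrow> ('x \<Rightarrow> 'u \<Rightarrow> real^'m) \<Rightarrow> ('x \<Rightarrow> 'u) set" where
  "Pol f h = {\<pi>. \<forall>x0 \<in> X0set f h. \<forall>k. h (traj f \<pi> x0 k) (\<pi> (traj f \<pi> x0 k)) \<le> 0}"

definition Lbar :: "('x \<Rightarrow> 'u \<Rightarrow> real^'m) \<Rightarrow> ('x \<Rightarrow> 'u \<Rightarrow> real) \<Rightarrow> 'x \<Rightarrow> 'u \<Rightarrow> ereal" where
  "Lbar h L x u = (if h x u \<le> 0 then ereal (L x u) else \<infinity>)"

definition total_cost :: "('x \<Rightarrow> 'u \<Rightarrow> 'x) \<Rightarrow> (nat \<Rightarrow> 'x \<Rightarrow> 'u \<Rightarrow> ereal) \<Rightarrow> ('x \<Rightarrow> 'u) \<Rightarrow> 'x \<Rightarrow> ereal" where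
  "total_cost f c \<pi> x0 =
     liminf (\<lambda>N. \<Sum>k<N. c k (traj f \<pi> x0 k) (\<pi> (traj f \<pi> x0 k)))"

definition disc_cost :: "('x \<Rightarrow> 'u \<Rightarrow> 'x) \<Rightarrow> ('x \<Rightarrow> 'u \<Rightarrow> real^'m) \<Rightarrow> ('x \<Rightarrow> 'u \<Rightarrow> real) \<Rightarrow> real
     \<Rightarrow> ('x \<Rightarrow> 'u) \<Rightarrow> 'x \<Rightarrow> ereal" where
  "disc_cost f h L \<gamma> \<pi> x0 = total_cost f (\<lambda>k x u. ereal (\<gamma> ^ k) * Lbar h L x u) \<pi> x0"

definition Vstar :: "('x \<Rightarrow> 'u \<Rightarrow> 'x) \<Rightarrow> ('x \<Rightarrow> 'u \<Rightarrow> real^'m) \<Rightarrow> ('x \<Rightarrow> 'u \<Rightarrow> real) \<Rightarrow> real \<Rightarrow> 'x \<Rightarrow> ereal" where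
  "Vstar f h L \<gamma> x0 = (INF \<pi> \<in> Pol f h. disc_cost f h L \<gamma> \<pi> x0)"

definition Ltilde :: "('x \<Rightarrow> 'u \<Rightarrow> 'x) \<Rightarrow> ('x \<Rightarrow> 'u \<Rightarrow> real^'m) \<Rightarrow> ('x \<Rightarrow> 'u \<Rightarrow> real) \<Rightarrow> real \<Rightarrow> 'x \<Rightarrow> 'u \<Rightarrow> ereal" where
  "Ltilde f h L \<gamma> x u = Lbar h L x u + ereal (\<gamma> - 1) * Vstar f h L \<gamma> (f x u)"

definition undisc_cost :: "('x \<Rightarrow> 'u \<Rightarrow> 'x) \<Rightarrow> ('x \<Rightarrow> 'u \<Rightarrow> real^'m) \<Rightarrow> ('x \<Rightarrow> 'u \<Rightarrow> real) \<Rightarrow> real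
     \<Rightarrow> ('x \<Rightarrow> 'u) \<Rightarrow> 'x \<Rightarrow> ereal" where
  "undisc_cost f h L \<gamma> \<pi> x0 = total_cost f (\<lambda>k. Ltilde f h L \<gamma>) \<pi> x0"

definition Vtilde :: "('x \<Rightarrow> 'u \<Rightarrow> 'x) \<Rightarrow> ('x \<Rightarrow> 'u \<Rightarrow> real^'m) \<Rightarrow> ('x \<Rightarrow> 'u \<Rightarrow> real) \<Rightarrow> real \<Rightarrow> 'x \<Rightarrow> ereal" where
  "Vtilde f h L \<gamma> x0 = (INF \<pi> \<in> Pol f h. undisc_cost f h L \<gamma> \<pi> x0)"

definition classK :: "(real \<Rightarrow> real) \<Rightarrow> bool" where
  "classK \<rho> \<longleftrightarrow> continuous_on {0..} \<rho> \<and> strict_mono_on {0..} \<rho> \<and> \<rho> 0 = 0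
      \<and> (\<forall>t \<ge> 0. \<rho> t \<ge> 0)"

end

theory Submission imports Defs
begin

lemma traj_shift: "traj f \<pi> (traj f \<pi> x k) j = traj f \<pi> x (j + k)"
  by (induction j) auto

lemma classK_conv:
  fixes y :: "nat \<Rightarrow> 'a::real_normed_vector"
  assumes K: "classK \<rho>" and bd: "\<And>N. (\<Sum>k<N. \<rho> (norm (y k - xs))) \<le> B"
  shows "y \<longlonglongrightarrow> xs"
proof -
  have nn: "\<And>t. t \<ge> 0 \<Longrightarrow> \<rho> t \<ge> 0" and sm: "strict_mono_on {0..} \<rho>" and z: "\<rho> 0 = 0"
    using K unfolding classK_def by auto
  have "summable (\<lambda>k. \<rho> (norm (y k - xs)))"
    by (rule summableI_nonneg_bounded[where x=B]) (auto intro: nn bd)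
  hence r0: "(\<lambda>k. \<rho> (norm (y k - xs))) \<longlonglongrightarrow> 0" by (rule summable_LIMSEQ_zero)
  show ?thesis
  proof (rule LIMSEQ_I)
    fix e :: real assume e: "0 < e"
    have pe: "\<rho> e > 0" using strict_mono_onD[OF sm, of 0 e] e z by auto
    from LIMSEQ_D[OF r0 pe] obtain no where no: "\<forall>n\<ge>no. norm (\<rho> (norm (y n - xs)) - 0) < \<rho> e" by blast
    have "norm (y n - xs) < e" if "n \<ge> no" for n
    proof (rule ccontr)
      assume "\<not> norm (y n - xs) < e"
      hence le: "e \<le> norm (y n - xs)" by simp
      have "\<rho> e \<le> \<rho> (norm (y n - xs))"
      proof (cases "e = norm (y n - xs)")
        case False thus ?thesis using strict_mono_onD[OF sm, of e "norm (y n - xs)"] le e by auto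
      qed simp
      moreover have "\<rho> (norm (y n - xs)) < \<rho> e" using no that nn[of "norm (y n - xs)"] by auto
      ultimately show False by simp
    qed
    thus "\<exists>no. \<forall>n\<ge>no. norm (y n - xs) < e" by blast
  qed
qed

lemma key_lower:
  fixes y :: "nat \<Rightarrow> 'a::real_normed_vector" and S w :: "nat \<Rightarrow> real"
  assumes K: "classK \<rho>"
    and s1: "\<And>N. S N \<ge> (\<Sum>k<N. \<rho> (norm (y k - xs))) - C"
    and s2: "\<And>N. S N \<ge> a - w N"
    and w: "y \<longlonglongrightarrow> xs \<Longrightarrow> w \<longlonglongrightarrow> 0"
  shows "ereal a \<le> liminf (\<lambda>N. ereal (S N))"
proof (cases "\<exists>B. \<forall>N. (\<Sum>k<N. \<rho> (norm (y k - xs))) \<le> B")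
  case True
  then obtain B where "\<And>N. (\<Sum>k<N. \<rho> (norm (y k - xs))) \<le> B" by blast
  hence "y \<longlonglongrightarrow> xs" using classK_conv[OF K] by blast
  hence "w \<longlonglongrightarrow> 0" by (rule w)
  hence "(\<lambda>N. a - w N) \<longlonglongrightarrow> a" using tendsto_diff[of "\<lambda>_. a" a sequentially w 0] by simp
  hence "(\<lambda>N. ereal (a - w N)) \<longlonglongrightarrow> ereal a" by simp
  hence "liminf (\<lambda>N. ereal (a - w N)) = ereal a" by (simp add: lim_imp_Liminf)
  moreover have "liminf (\<lambda>N. ereal (a - w N)) \<le> liminf (\<lambda>N. ereal (S N))"
    by (rule Liminf_mono) (use s2 in auto)
  ultimately show ?thesis by simp
next
  case False
  then obtain N0 where N0: "(\<Sum>k<N0. \<rho> (norm (y k - xs))) > a + C" by (meson not_le)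
  have nn: "\<And>t. t \<ge> 0 \<Longrightarrow> \<rho> t \<ge> 0" using K unfolding classK_def by auto
  have "eventually (\<lambda>N. ereal a \<le> ereal (S N)) sequentially"
    unfolding eventually_sequentially
  proof (intro exI allI impI)
    fix N assume "N0 \<le> N"
    hence "(\<Sum>k<N0. \<rho> (norm (y k - xs))) \<le> (\<Sum>k<N. \<rho> (norm (y k - xs)))"
      by (intro sum_mono2) (auto intro: nn)
    thus "ereal a \<le> ereal (S N)" using N0 s1[of N] by simp
  qed
  thus ?thesis by (rule Liminf_bounded)
qed

theorem theorem3:
  fixes f :: "real^'nx \<Rightarrow> real^'nu \<Rightarrow> real^'nx"
    and h :: "real^'nx \<Rightarrow> real^'nu \<Rightarrow> real^'m"
    and L :: "real^'nx \<Rightarrow> real^'nu \<Rightarrow> real"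
    and \<gamma> :: real
    and xs :: "real^'nx" and us :: "real^'nu"
    and lam :: "real^'nx \<Rightarrow> real" and \<rho> :: "real \<Rightarrow> real"
    and \<pi>s :: "real^'nx \<Rightarrow> real^'nu"
  assumes gamma: "0 < \<gamma>" "\<gamma> < 1"
    and steady: "f xs us = xs" "h xs us \<le> 0" "L xs us = 0"
    and A1: "compact (Zset h)" "compact (X0set f h)"
    and A2_lambda: "isCont lam xs" "\<And>S. bounded S \<Longrightarrow> bounded (lam ` S)" "lam xs = 0"
    and A2_rho: "classK \<rho>"
    and A2_i: "\<And>x u. (x, u) \<in> Zset h \<Longrightarrow>
                 L x u + lam x - \<gamma> * lam (f x u) \<ge> \<rho> (norm (x - xs))"
    and A2_ii: "\<And>x u. (x, u) \<in> Zset h \<Longrightarrow>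
                 ereal (L x u + lam x - lam (f x u)) + ereal (\<gamma> - 1) * Vstar f h L \<gamma> (f x u)
                   \<ge> ereal (\<rho> (norm (x - xs)))"
    and A3: "isCont (Vstar f h L \<gamma>) xs" "\<exists>M. \<forall>x \<in> X0set f h. \<bar>Vstar f h L \<gamma> x\<bar> \<le> ereal M"
    and opt: "\<pi>s \<in> Pol f h" "\<And>x0. x0 \<in> X0set f h \<Longrightarrow> disc_cost f h L \<gamma> \<pi>s x0 = Vstar f h L \<gamma> x0"
    and bellman: "\<And>x. Vstar f h L \<gamma> x =
                   (INF \<pi> \<in> Pol f h. Lbar h L x (\<pi> x) + ereal \<gamma> * Vstar f h L \<gamma> (f x (\<pi> x)))"
  shows "\<forall>x0 \<in> X0set f h.
           undisc_cost f h L \<gamma> \<pi>s x0 = Vtilde f h L \<gamma> x0 \<and> Vtilde f h L \<gamma> x0 = Vstar f h L \<gamma> x0"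
proof -
  define V where "V = Vstar f h L \<gamma>"
  define X0 where "X0 = X0set f h"
  have feas: "h (traj f \<pi> x k) (\<pi> (traj f \<pi> x k)) \<le> 0" if "\<pi> \<in> Pol f h" "x \<in> X0" for \<pi> x k
    using that unfolding Pol_def X0_def by auto
  have inX0: "traj f \<pi> x k \<in> X0" if "\<pi> \<in> Pol f h" "x \<in> X0" for \<pi> x k
  proof -
    have "\<forall>j. h (traj f \<pi> (traj f \<pi> x k) j) (\<pi> (traj f \<pi> (traj f \<pi> x k) j)) \<le> 0"
      using feas[OF that] by (simp add: traj_shift)
    thus ?thesis unfolding X0_def X0set_def by blast
  qed
  have Lb: "Lbar h L x u = ereal (L x u)" if "h x u \<le> 0" for x u
    using that by (simp add: Lbar_def)
  have Z: "(x, u) \<in> Zset h \<longleftrightarrow> h x u \<le> 0" for x u by (simp add: Zset_def)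
  obtain M where M: "\<And>x. x \<in> X0 \<Longrightarrow> \<bar>V x\<bar> \<le> ereal M" using A3(2) unfolding V_def X0_def by blast
  define v where "v x = real_of_ereal (V x)" for x
  have Vv: "V x = ereal (v x)" if "x \<in> X0" for x
    using M[OF that] unfolding v_def by (cases "V x") auto
  have vM: "\<bar>v x\<bar> \<le> M" if "x \<in> X0" for x using M[OF that] Vv[OF that] by simp
  have "bounded (lam ` X0)" using A2_lambda(2) A1(2) compact_imp_bounded unfolding X0_def by blast
  then obtain B where B: "\<And>x. x \<in> X0 \<Longrightarrow> \<bar>lam x\<bar> \<le> B" unfolding bounded_iff by auto
  have bell: "V x \<le> Lbar h L x (\<pi> x) + ereal \<gamma> * V (f x (\<pi> x))" if "\<pi> \<in> Pol f h" for \<pi> x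
    unfolding V_def by (subst bellman) (rule INF_lower[OF that])
  have rho0: "\<rho> t \<ge> 0" if "t \<ge> 0" for t using A2_rho that unfolding classK_def by auto
  have trajc: "traj f (\<lambda>_. us) xs k = xs" for k by (induction k) (auto simp: steady)
  have xsX0: "xs \<in> X0" unfolding X0_def X0set_def using trajc steady by (intro CollectI exI[of _ "\<lambda>_. us"]) auto
  have Vxs_ge: "disc_cost f h L \<gamma> \<pi> xs \<ge> 0" if \<pi>: "\<pi> \<in> Pol f h" for \<pi>
  proof -
    define y where "y k = traj f \<pi> xs k" for k
    have fe: "h (y k) (\<pi> (y k)) \<le> 0" for k unfolding y_def by (rule feas[OF \<pi> xsX0])
    have yX: "y k \<in> X0" for k unfolding y_def by (rule inX0[OF \<pi> xsX0])
    have ysuc: "y (Suc k) = f (y k) (\<pi> (y k))" for k by (simp add: y_def)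
    define D where "D N = (\<Sum>k<N. \<gamma>^k * L (y k) (\<pi> (y k)))" for N
    have eq: "disc_cost f h L \<gamma> \<pi> xs = liminf (\<lambda>N. ereal (D N))"
      unfolding disc_cost_def total_cost_def D_def y_def[symmetric]
      by (simp add: Lb[OF fe])
    have step: "\<gamma>^k * L (y k) (\<pi> (y k)) \<ge> \<gamma>^(Suc k) * lam (y (Suc k)) - \<gamma>^k * lam (y k)" for k
    proof -
      have "L (y k) (\<pi> (y k)) + lam (y k) - \<gamma> * lam (y (Suc k)) \<ge> \<rho> (norm (y k - xs))"
        using A2_i[of "y k" "\<pi> (y k)"] fe[of k] Z ysuc by simp
      hence "L (y k) (\<pi> (y k)) + lam (y k) - \<gamma> * lam (y (Suc k)) \<ge> 0" using rho0[of "norm (y k - xs)"] by simp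
      hence "\<gamma>^k * (L (y k) (\<pi> (y k)) + lam (y k) - \<gamma> * lam (y (Suc k))) \<ge> 0" using gamma by simp
      thus ?thesis by (simp add: algebra_simps)
    qed
    have Dge: "D N \<ge> - (\<gamma>^N * B)" for N
    proof -
      have "D N \<ge> (\<Sum>k<N. \<gamma>^(Suc k) * lam (y (Suc k)) - \<gamma>^k * lam (y k))"
        unfolding D_def by (rule sum_mono) (rule step)
      also have "(\<Sum>k<N. \<gamma>^(Suc k) * lam (y (Suc k)) - \<gamma>^k * lam (y k)) = \<gamma>^N * lam (y N) - lam (y 0)"
        using sum_lessThan_telescope[of "\<lambda>k. \<gamma>^k * lam (y k)" N] by simp
      also have "lam (y 0) = 0" using A2_lambda(3) by (simp add: y_def)
      finally have "D N \<ge> \<gamma>^N * lam (y N)" by simp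
      moreover have "\<gamma>^N * lam (y N) \<ge> - (\<gamma>^N * B)"
      proof -
        have "0 \<le> \<gamma>^N" using gamma by simp
        thus ?thesis using abs_le_D2[OF B[OF yX[of N]]] mult_left_mono[of "- lam (y N)" B "\<gamma>^N"] by linarith
      qed
      ultimately show ?thesis by simp
    qed
    have "(\<lambda>N. - (\<gamma>^N * B)) \<longlonglongrightarrow> - (0 * B)"
      by (intro tendsto_intros LIMSEQ_power_zero) (use gamma in auto)
    hence "(\<lambda>N. ereal (- (\<gamma>^N * B))) \<longlonglongrightarrow> ereal 0" by simp
    hence "liminf (\<lambda>N. ereal (- (\<gamma>^N * B))) = 0" by (simp add: lim_imp_Liminf zero_ereal_def)
    moreover have "liminf (\<lambda>N. ereal (- (\<gamma>^N * B))) \<le> liminf (\<lambda>N. ereal (D N))"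
      by (rule Liminf_mono) (use Dge in auto)
    ultimately show ?thesis using eq by simp
  qed
  have Vxs: "V xs = 0"
  proof (rule antisym)
    define \<pi>' where "\<pi>' x = (if x = xs then us else \<pi>s x)" for x
    have p1: "\<pi>' xs = us" and p2: "\<And>x. x \<noteq> xs \<Longrightarrow> \<pi>' x = \<pi>s x" by (auto simp: \<pi>'_def)
    have tr': "traj f \<pi>' x0 k = traj f \<pi>s x0 k \<or> traj f \<pi>' x0 k = xs" for x0 k
    proof (induction k)
      case (Suc k)
      show ?case
      proof (cases "traj f \<pi>' x0 k = xs")
        case True thus ?thesis by (simp add: p1 steady)
      next
        case False
        with Suc have "traj f \<pi>' x0 k = traj f \<pi>s x0 k" by blast
        thus ?thesis using False by (simp add: p2)
      qed
    qed simp
    have "\<pi>' \<in> Pol f h"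
      unfolding Pol_def
    proof (intro CollectI ballI allI)
      fix x0 k assume x0: "x0 \<in> X0set f h"
      show "h (traj f \<pi>' x0 k) (\<pi>' (traj f \<pi>' x0 k)) \<le> 0"
      proof (cases "traj f \<pi>' x0 k = xs")
        case True thus ?thesis by (simp add: p1 steady)
      next
        case False
        with tr' have "traj f \<pi>' x0 k = traj f \<pi>s x0 k" by blast
        thus ?thesis using False feas[OF opt(1), of x0 k] x0 by (simp add: p2 X0_def)
      qed
    qed
    moreover have "disc_cost f h L \<gamma> \<pi>' xs = 0"
    proof -
      have t: "traj f \<pi>' xs k = xs" for k by (induction k) (auto simp: p1 steady)
      show ?thesis unfolding disc_cost_def total_cost_def
        by (simp add: t p1 Lb[OF steady(2)] steady zero_ereal_def[symmetric] Liminf_const)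
    qed
    ultimately show "V xs \<le> 0" unfolding V_def Vstar_def by (metis INF_lower)
    show "0 \<le> V xs" unfolding V_def Vstar_def by (rule INF_greatest) (rule Vxs_ge)
  qed
  have tr1: "traj f \<pi> (f x (\<pi> x)) j = traj f \<pi> x (Suc j)" for \<pi> x j
    using traj_shift[of f \<pi> x 1 j] by simp
  have popt: "V x = ereal (L x (\<pi>s x)) + ereal \<gamma> * V (f x (\<pi>s x))" if x: "x \<in> X0" for x
  proof -
    define D where "D z N = (\<Sum>k<N. \<gamma>^k * L (traj f \<pi>s z k) (\<pi>s (traj f \<pi>s z k)))" for z N
    have dc: "disc_cost f h L \<gamma> \<pi>s z = liminf (\<lambda>N. ereal (D z N))" if z: "z \<in> X0" for z
      unfolding disc_cost_def total_cost_def D_def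
      by (simp add: Lb[OF feas[OF opt(1) z]])
    have x1: "f x (\<pi>s x) \<in> X0" using inX0[OF opt(1) x, of 1] by simp
    have Dsuc: "D x (Suc N) = L x (\<pi>s x) + \<gamma> * D (f x (\<pi>s x)) N" for N
      unfolding D_def sum.lessThan_Suc_shift by (simp add: tr1 sum_distrib_left mult.assoc)
    have "V x = liminf (\<lambda>N. ereal (D x N))" using opt(2)[of x] x dc[OF x] by (simp add: V_def X0_def)
    also have "\<dots> = liminf (\<lambda>N. ereal (D x (N+1)))" by (rule liminf_shift[symmetric])
    also have "\<dots> = liminf (\<lambda>N. ereal (L x (\<pi>s x)) + ereal \<gamma> * ereal (D (f x (\<pi>s x)) N))"
      by (simp add: Dsuc)
    also have "\<dots> = ereal (L x (\<pi>s x)) + liminf (\<lambda>N. ereal \<gamma> * ereal (D (f x (\<pi>s x)) N))"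
      by (rule Liminf_add_ereal_left) auto
    also have "liminf (\<lambda>N. ereal \<gamma> * ereal (D (f x (\<pi>s x)) N)) = ereal \<gamma> * liminf (\<lambda>N. ereal (D (f x (\<pi>s x)) N))"
      by (rule Liminf_ereal_mult_left) (use gamma in auto)
    also have "liminf (\<lambda>N. ereal (D (f x (\<pi>s x)) N)) = V (f x (\<pi>s x))"
      using opt(2)[of "f x (\<pi>s x)"] x1 dc[OF x1] by (simp add: V_def X0_def)
    finally show ?thesis .
  qed
  have gen: "ereal (v x0) \<le> undisc_cost f h L \<gamma> \<pi> x0 \<and> (\<pi> = \<pi>s \<longrightarrow> undisc_cost f h L \<gamma> \<pi> x0 = ereal (v x0))"
    if \<pi>: "\<pi> \<in> Pol f h" and x0: "x0 \<in> X0" for \<pi> x0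
  proof -
    define y where "y k = traj f \<pi> x0 k" for k
    have fe: "h (y k) (\<pi> (y k)) \<le> 0" for k unfolding y_def by (rule feas[OF \<pi> x0])
    have yX: "y k \<in> X0" for k unfolding y_def by (rule inX0[OF \<pi> x0])
    have ysuc: "f (y k) (\<pi> (y k)) = y (Suc k)" for k by (simp add: y_def)
    define T where "T k = L (y k) (\<pi> (y k)) + (\<gamma> - 1) * v (y (Suc k))" for k
    define S where "S N = (\<Sum>k<N. T k)" for N
    have Lt: "Ltilde f h L \<gamma> (y k) (\<pi> (y k)) = ereal (T k)" for k
      unfolding Ltilde_def T_def V_def[symmetric] ysuc using Lb[OF fe[of k]] Vv[OF yX[of "Suc k"]] by simp
    have uc: "undisc_cost f h L \<gamma> \<pi> x0 = liminf (\<lambda>N. ereal (S N))"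
      unfolding undisc_cost_def total_cost_def S_def y_def[symmetric] by (simp add: Lt)
    have T1: "T k \<ge> v (y k) - v (y (Suc k))" for k
    proof -
      have "V (y k) \<le> Lbar h L (y k) (\<pi> (y k)) + ereal \<gamma> * V (f (y k) (\<pi> (y k)))" by (rule bell[OF \<pi>])
      hence "ereal (v (y k)) \<le> ereal (L (y k) (\<pi> (y k)) + \<gamma> * v (y (Suc k)))"
        using Lb[OF fe[of k]] Vv[OF yX[of k]] Vv[OF yX[of "Suc k"]] by (simp add: ysuc)
      thus ?thesis unfolding T_def by (simp add: algebra_simps)
    qed
    have T2: "T k \<ge> \<rho> (norm (y k - xs)) - lam (y k) + lam (y (Suc k))" for k
    proof -
      have "ereal (L (y k) (\<pi> (y k)) + lam (y k) - lam (y (Suc k))) + ereal (\<gamma> - 1) * V (y (Suc k))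
                   \<ge> ereal (\<rho> (norm (y k - xs)))"
        using A2_ii[of "y k" "\<pi> (y k)"] fe[of k] Z by (simp add: ysuc V_def)
      hence "ereal (L (y k) (\<pi> (y k)) + lam (y k) - lam (y (Suc k)) + (\<gamma> - 1) * v (y (Suc k)))
                   \<ge> ereal (\<rho> (norm (y k - xs)))"
        using Vv[OF yX[of "Suc k"]] by simp
      thus ?thesis unfolding T_def by simp
    qed
    have S1: "S N \<ge> v x0 - v (y N)" for N
    proof -
      have a: "S N \<ge> (\<Sum>k<N. v (y k) - v (y (Suc k)))" unfolding S_def by (rule sum_mono) (rule T1)
      have b: "(\<Sum>k<N. v (y k) - v (y (Suc k))) = v (y 0) - v (y N)"
        using sum_lessThan_telescope'[of "\<lambda>k. v (y k)" N] by simp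
      from a b show ?thesis by (simp add: y_def)
    qed
    have S2: "S N \<ge> (\<Sum>k<N. \<rho> (norm (y k - xs))) - 2 * B" for N
    proof -
      have a: "S N \<ge> (\<Sum>k<N. \<rho> (norm (y k - xs)) + (lam (y (Suc k)) - lam (y k)))"
        unfolding S_def by (rule sum_mono) (use T2 in \<open>simp add: algebra_simps\<close>)
      have b: "(\<Sum>k<N. \<rho> (norm (y k - xs)) + (lam (y (Suc k)) - lam (y k))) = (\<Sum>k<N. \<rho> (norm (y k - xs))) + (lam (y N) - lam (y 0))"
        using sum_lessThan_telescope[of "\<lambda>k. lam (y k)" N] by (simp add: sum.distrib)
      from a b have "S N \<ge> (\<Sum>k<N. \<rho> (norm (y k - xs))) + (lam (y N) - lam (y 0))" by simp
      thus ?thesis using B[OF yX[of N]] B[OF yX[of 0]] by (simp add: abs_le_iff)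
    qed
    have w0: "(\<lambda>N. v (y N)) \<longlonglongrightarrow> 0" if "y \<longlonglongrightarrow> xs"
    proof -
      have "(\<lambda>N. V (y N)) \<longlonglongrightarrow> V xs"
        using isCont_tendsto_compose[OF A3(1) that] by (simp add: V_def)
      hence "(\<lambda>N. ereal (v (y N))) \<longlonglongrightarrow> ereal 0" using Vxs Vv[OF yX] by (simp add: zero_ereal_def)
      thus ?thesis by simp
    qed
    have low: "ereal (v x0) \<le> undisc_cost f h L \<gamma> \<pi> x0"
      unfolding uc by (rule key_lower[OF A2_rho S2 S1 w0])
    moreover have "undisc_cost f h L \<gamma> \<pi> x0 = ereal (v x0)" if eqp: "\<pi> = \<pi>s"
    proof -
      have Teq: "T k = v (y k) - v (y (Suc k))" for k
      proof -
        have "V (y k) = ereal (L (y k) (\<pi> (y k))) + ereal \<gamma> * V (f (y k) (\<pi> (y k)))"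
          using popt[OF yX[of k]] eqp by simp
        hence "ereal (v (y k)) = ereal (L (y k) (\<pi> (y k)) + \<gamma> * v (y (Suc k)))"
          using Vv[OF yX[of k]] Vv[OF yX[of "Suc k"]] by (simp add: ysuc)
        thus ?thesis unfolding T_def by (simp add: algebra_simps)
      qed
      have Seq: "S N = v x0 - v (y N)" for N
        unfolding S_def Teq using sum_lessThan_telescope'[of "\<lambda>k. v (y k)" N] by (simp add: y_def)
      have "(\<Sum>k<N. \<rho> (norm (y k - xs))) \<le> 2 * M + 2 * B" for N
        using S2[of N] Seq[of N] vM[OF x0] vM[OF yX[of N]] by (simp add: abs_le_iff)
      hence "y \<longlonglongrightarrow> xs" by (rule classK_conv[OF A2_rho])
      hence "(\<lambda>N. v x0 - v (y N)) \<longlonglongrightarrow> v x0 - 0" by (intro tendsto_intros w0)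
      hence "(\<lambda>N. ereal (S N)) \<longlonglongrightarrow> ereal (v x0)" by (simp add: Seq)
      thus ?thesis unfolding uc by (simp add: lim_imp_Liminf)
    qed
    ultimately show ?thesis by blast
  qed
  show ?thesis
  proof (intro ballI)
    fix x0 assume x0': "x0 \<in> X0set f h"
    hence x0: "x0 \<in> X0" by (simp add: X0_def)
    have e1: "undisc_cost f h L \<gamma> \<pi>s x0 = V x0" using gen[OF opt(1) x0] Vv[OF x0] by simp
    have "Vtilde f h L \<gamma> x0 \<le> undisc_cost f h L \<gamma> \<pi>s x0"
      unfolding Vtilde_def by (rule INF_lower[OF opt(1)])
    moreover have "V x0 \<le> Vtilde f h L \<gamma> x0"
      unfolding Vtilde_def Vv[OF x0] by (rule INF_greatest) (use gen x0 in blast)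
    ultimately show "undisc_cost f h L \<gamma> \<pi>s x0 = Vtilde f h L \<gamma> x0 \<and> Vtilde f h L \<gamma> x0 = Vstar f h L \<gamma> x0"
      using e1 unfolding V_def by auto
  qed
qed

end
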